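(* Let $n\ge1$ and let $\sigma\in S_n\le B_n$ have disjoint cycle decomposition (including fixed points as cycles of length $1$) \[ C_1=(i_{1,1}\,\dots\,i_{1,d_1}),\ \dots,\ C_j=(i_{j,1}\,\dots\,i_{j,d_j}),\qquad \sum_{r=1}^j d_r=n. \] Let $\tau\in C_{B_n}(\sigma)$. Then there exist a unique $\tau'\in C_{S_n}(\sigma)$ and unique $\lambda_1,\dots,\lambda_j\in\mathbb Z/2\mathbb Z$ such that \[ \tau=\tau' v,\qquad v=\sum_{r=1}^j\lambda_r\,(e_{i_{r,1}}+\dots+e_{i_{r,d_r}}), \] and moreover \[ \phi(\sigma,\tau)=\epsilon^{\sum_{r=1}^j\lambda_r(d_r-1)}. \]
   Context: $B_n=(\mathbb Z/2\mathbb Z)^n\rtimes S_n$ is the hyperoctahedral group, $S_n$ acting by permuting coordinates; $e_i$ is the $i$th unit vector of $(\mathbb Z/2\mathbb Z)^n$; $C_{B_n}(\sigma)$ and $C_{S_n}(\sigma)$ denote centralizers. $H_n$ is the set of pairs $(a,b)\in(\mathbb Z/2\mathbb Z)^n\times\mathbb Z/2\mathbb Z$ with group law $(a_1,b_1)(a_2,b_2)=(a_1+a_2,\ b_1+b_2+\sum_{1\le i<j\le n}a_{1,i}a_{2,j})$; put $x_i=(e_i,0)$ and $\epsilon=(0,1)$. $S_n$ acts on $H_n$ by automorphisms via $\sigma(x_i)=x_{\sigma(i)}$, $\sigma(\epsilon)=\epsilon$, and $G_n=H_n\rtimes S_n$ (with $\sigma h\sigma^{-1}=\sigma(h)$). The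 element $\epsilon$ is central in $G_n$ and $G_n/\{1,\epsilon\}\cong B_n$ (via $x_i\mapsto e_i$, $\sigma\mapsto\sigma$). For commuting $\sigma,\tau\in B_n$ with lifts $\widetilde\sigma,\widetilde\tau\in G_n$, define $\phi(\sigma,\tau)=\widetilde\sigma\widetilde\tau\widetilde\sigma^{-1}\widetilde\tau^{-1}\in\langle\epsilon\rangle$, which is independent of the choice of lifts. *)

theory Defs
  imports "HOL-Combinatorics.Permutations" "HOL-Combinatorics.Orbits"
begin

text \<open>Indices are 0-based: the coordinate set is {..<n} (paper: {1..n}).
  Vectors of (Z/2Z)^n are functions nat => bool vanishing outside {..<n};
  addition is exclusive or. Permutations in S_n are functions nat => nat
  that permute {..<n} (identity outside).\<close>

type_synonym vec = "nat \<Rightarrow> bool"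
type_synonym perm = "nat \<Rightarrow> nat"

definition vadd :: "vec \<Rightarrow> vec \<Rightarrow> vec" where
  "vadd u v = (\<lambda>i. u i \<noteq> v i)"

definition zvec :: vec where
  "zvec = (\<lambda>_. False)"

definition unitv :: "nat \<Rightarrow> vec" where
  "unitv i = (\<lambda>j. j = i)"

text \<open>S_n acts on (Z/2Z)^n by permuting coordinates: pi(e_i) = e_(pi i).\<close>
definition pact :: "perm \<Rightarrow> vec \<Rightarrow> vec" where
  "pact p v = (\<lambda>i. v (inv p i))"

text \<open>An element (v, p) stands for the product v p.\<close>
definition Bcarrier :: "nat \<Rightarrow> (vec \<times> perm) set" where
  "Bcarrier n = {(v, p). p permutes {..<n} \<and> (\<forall>i\<ge>n. \<not> v i)}"

definition Bmul :: "vec \<times> perm \<Rightarrow> vec \<times> perm \<Rightarrow> vec \<times> perm" where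
  "Bmul x y = (vadd (fst x) (pact (snd x) (fst y)), snd x \<circ> snd y)"

definition Bperm :: "perm \<Rightarrow> vec \<times> perm" where
  "Bperm p = (zvec, p)"

definition Bvec :: "vec \<Rightarrow> vec \<times> perm" where
  "Bvec v = (v, id)"

type_synonym helt = "vec \<times> bool"

definition Hmul :: "nat \<Rightarrow> helt \<Rightarrow> helt \<Rightarrow> helt" where
  "Hmul n x y = (vadd (fst x) (fst y),
     (snd x \<noteq> snd y) \<noteq> odd (card {(i, j). i < j \<and> j < n \<and> fst x i \<and> fst y j}))"

definition Hinv :: "nat \<Rightarrow> helt \<Rightarrow> helt" where
  "Hinv n x = (fst x, snd x \<noteq> odd (card {(i, j). i < j \<and> j < n \<and> fst x i \<and> fst x j}))"

text \<open>generators x_i = (e_i, 0) and epsilon = (0, 1)\<close>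
definition xgen :: "nat \<Rightarrow> helt" where
  "xgen i = (unitv i, False)"

text \<open>Action of S_n on H_n by the automorphism determined by
  p(x_i) = x_(p i), p(epsilon) = epsilon: writing
  (a, b) = epsilon^b x_(i_k) ... x_(i_1) with i_1 < ... < i_k the support of a,
  its image is epsilon^b x_(p i_k) ... x_(p i_1).\<close>
definition Hact :: "nat \<Rightarrow> perm \<Rightarrow> helt \<Rightarrow> helt" where
  "Hact n p h = foldl (Hmul n) (zvec, snd h)
      (map (\<lambda>i. xgen (p i)) (rev (filter (fst h) [0..<n])))"

type_synonym gelt = "helt \<times> perm"

definition Gmul :: "nat \<Rightarrow> gelt \<Rightarrow> gelt \<Rightarrow> gelt" where
  "Gmul n x y = (Hmul n (fst x) (Hact n (snd x) (fst y)), snd x \<circ> snd y)"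

definition Ginv :: "nat \<Rightarrow> gelt \<Rightarrow> gelt" where
  "Ginv n x = (Hact n (inv (snd x)) (Hinv n (fst x)), inv (snd x))"

definition Geps :: "nat \<Rightarrow> gelt" where
  "Geps k = ((zvec, odd k), id)"

text \<open>A lift of (v, p) in B_n to G_n (the quotient map sends x_i to e_i, p to p).\<close>
definition lift :: "vec \<times> perm \<Rightarrow> gelt" where
  "lift x = ((fst x, False), snd x)"

text \<open>phi(s, t) = s~ t~ s~^-1 t~^-1 for lifts s~, t~ (independent of the lifts).\<close>
definition phi :: "nat \<Rightarrow> vec \<times> perm \<Rightarrow> vec \<times> perm \<Rightarrow> gelt" where
  "phi n s t = Gmul n (Gmul n (Gmul n (lift s) (lift t)) (Ginv n (lift s))) (Ginv n (lift t))"

definition cycles_of :: "nat \<Rightarrow> perm \<Rightarrow> nat set set" where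
  "cycles_of n p = (\<lambda>i. orbit p i) ` {..<n}"

text \<open>v = sum over cycles C of lam(C) times (sum of e_i over i in C)\<close>
definition cycvec :: "nat \<Rightarrow> perm \<Rightarrow> (nat set \<Rightarrow> bool) \<Rightarrow> vec" where
  "cycvec n p lam = (\<lambda>i. i < n \<and> lam (orbit p i))"

end

theory Submission imports Defs "HOL-Combinatorics.Cycles"
begin

lemma odd_card_xor:
  assumes "finite A"
  shows "odd (card {x\<in>A. P x \<noteq> Q x}) = (odd (card {x\<in>A. P x}) \<noteq> odd (card {x\<in>A. Q x}))"
proof -
  have f: "finite {x\<in>A. R x}" for R using assms by auto
  have 1: "card {x\<in>A. P x} = card {x\<in>A. P x \<and> Q x} + card {x\<in>A. P x \<and> \<not> Q x}"
    by (subst card_Un_disjoint[symmetric]) (auto intro: f arg_cong[where f=card])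
  have 2: "card {x\<in>A. Q x} = card {x\<in>A. P x \<and> Q x} + card {x\<in>A. \<not> P x \<and> Q x}"
    by (subst card_Un_disjoint[symmetric]) (auto intro: f arg_cong[where f=card])
  have 3: "card {x\<in>A. P x \<noteq> Q x} = card {x\<in>A. P x \<and> \<not> Q x} + card {x\<in>A. \<not> P x \<and> Q x}"
    by (subst card_Un_disjoint[symmetric]) (auto intro: f arg_cong[where f=card])
  show ?thesis unfolding 1 2 3 by auto
qed

definition invs :: "nat set \<Rightarrow> perm \<Rightarrow> (nat \<times> nat) set" where
  "invs T p = {(i,j). i\<in>T \<and> j\<in>T \<and> i<j \<and> p j < p i}"

definition Npar :: "nat set \<Rightarrow> perm \<Rightarrow> bool" where
  "Npar T p = odd (card (invs T p))"

lemma invs_sub: "invs T p \<subseteq> T \<times> T" by (auto simp: invs_def)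

lemma Npar_id: "Npar T id = False"
proof -
  have "invs T id = {}" by (auto simp: invs_def)
  then show ?thesis by (simp add: Npar_def)
qed

lemma Npar_hom:
  assumes T: "finite T" and p: "p permutes T" and q: "q permutes T"
  shows "Npar T (p \<circ> q) = (Npar T p \<noteq> Npar T q)"
proof -
  define P where "P = {(i,j). i\<in>T \<and> j\<in>T \<and> (i::nat)<j}"
  have fP: "finite P" unfolding P_def
    by (rule finite_subset[of _ "T\<times>T"]) (auto simp: T)
  define f where "f = (\<lambda>(i,j). q j < q i)"
  define g where "g = (\<lambda>(i,j). p (q j) < p (q i))"
  define h where "h = (\<lambda>x. g x \<noteq> f x)"
  have e1: "invs T (p\<circ>q) = {x\<in>P. f x \<noteq> h x}" by (auto simp: invs_def P_def f_def g_def h_def)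
  have e2: "invs T q = {x\<in>P. f x}" by (auto simp: invs_def P_def f_def)
  have qinj: "inj q" using q permutes_inj by blast
  have pinj: "inj p" using p permutes_inj by blast
  define \<phi> where "\<phi> = (\<lambda>(i,j). (min (q i) (q j), max (q i) (q j)))"
  have inj: "inj_on \<phi> {x\<in>P. h x}"
  proof (rule inj_onI)
    fix x y assume "x \<in> {x\<in>P. h x}" "y \<in> {x\<in>P. h x}" "\<phi> x = \<phi> y"
    then obtain i j i' j' where x: "x = (i,j)" "i<j" and y: "y = (i',j')" "i'<j'"
      and e: "min (q i) (q j) = min (q i') (q j')" "max (q i) (q j) = max (q i') (q j')"
      by (auto simp: P_def \<phi>_def)
    have "q i \<noteq> q j" "q i' \<noteq> q j'" using x y qinj by (auto dest: injD)
    then have "(q i = q i' \<and> q j = q j') \<or> (q i = q j' \<and> q j = q i')"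
      using e by (auto simp: min_def max_def split: if_splits)
    then have "(i = i' \<and> j = j') \<or> (i = j' \<and> j = i')" using qinj by (auto dest: injD)
    then show "x = y" using x y by auto
  qed
  have img: "\<phi> ` {x\<in>P. h x} = invs T p"
  proof
    show "\<phi> ` {x\<in>P. h x} \<subseteq> invs T p"
    proof
      fix z assume "z \<in> \<phi> ` {x\<in>P. h x}"
      then obtain i j where ij: "i\<in>T" "j\<in>T" "i<j" "h (i,j)" and z: "z = \<phi> (i,j)"
        by (auto simp: P_def)
      have qn: "q i \<noteq> q j" using ij qinj by (auto dest: injD)
      have "p (q i) \<noteq> p (q j)" using qn pinj by (auto dest: injD)
      moreover have "q i \<in> T" "q j \<in> T" using ij q by (auto simp: permutes_in_image)
      ultimately show "z \<in> invs T p" using ij qn z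
        by (auto simp: invs_def \<phi>_def h_def g_def f_def min_def max_def)
    qed
  next
    show "invs T p \<subseteq> \<phi> ` {x\<in>P. h x}"
    proof
      fix z assume z: "z \<in> invs T p"
      then obtain a b where ab: "z = (a,b)" "a\<in>T" "b\<in>T" "a<b" "p b < p a" by (auto simp: invs_def)
      define i where "i = inv q a"
      define j where "j = inv q b"
      have qi: "q i = a" "q j = b" using q unfolding i_def j_def
        by (auto simp: permutes_inverses)
      have T': "i \<in> T" "j \<in> T" using ab q unfolding i_def j_def
        by (auto simp: permutes_in_image permutes_inv)
      have "i \<noteq> j" using qi ab by auto
      show "z \<in> \<phi> ` {x\<in>P. h x}"
      proof (cases "i < j")
        case True
        show ?thesis
        proof (rule image_eqI[where x="(i,j)"])
          show "z = \<phi> (i,j)" using ab qi True by (auto simp: \<phi>_def)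
          show "(i,j) \<in> {x\<in>P. h x}" using ab qi T' True by (auto simp: P_def h_def g_def f_def)
        qed
      next
        case False
        then have "j < i" using \<open>i\<noteq>j\<close> by auto
        show ?thesis
        proof (rule image_eqI[where x="(j,i)"])
          show "z = \<phi> (j,i)" using ab qi \<open>j<i\<close> by (auto simp: \<phi>_def)
          show "(j,i) \<in> {x\<in>P. h x}" using ab qi T' \<open>j<i\<close> by (auto simp: P_def h_def g_def f_def)
        qed
      qed
    qed
  qed
  have e3: "card {x\<in>P. h x} = card (invs T p)"
    using card_image[OF inj] img by simp
  show ?thesis unfolding Npar_def e1 e2 odd_card_xor[OF fP] e3 by blast
qed


lemma Npar_transpose_lt:
  assumes T: "finite T" and ab: "a\<in>T" "b\<in>T" "a<b"
  shows "Npar T (transpose a b)"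
proof -
  define M where "M = {k\<in>T. a<k \<and> k<b}"
  have fM: "finite M" using T by (auto simp: M_def)
  have e: "invs T (transpose a b) = insert (a,b) ((\<lambda>k. (a,k)) ` M \<union> (\<lambda>k. (k,b)) ` M)"
    using ab by (auto simp: invs_def M_def transpose_def split: if_splits)
  have d: "(\<lambda>k. (a,k)) ` M \<inter> (\<lambda>k. (k,b)) ` M = {}" by (auto simp: M_def)
  have c: "card ((\<lambda>k. (a,k)) ` M \<union> (\<lambda>k. (k,b)) ` M) = card M + card M"
    by (subst card_Un_disjoint) (auto simp: fM d card_image inj_on_def)
  have "(a,b) \<notin> (\<lambda>k. (a,k)) ` M \<union> (\<lambda>k. (k,b)) ` M" by (auto simp: M_def)
  then have "card (invs T (transpose a b)) = Suc (card M + card M)"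
    unfolding e using fM by (simp add: c)
  then show ?thesis by (simp add: Npar_def)
qed

lemma Npar_transpose:
  assumes T: "finite T" and ab: "a\<in>T" "b\<in>T" "a\<noteq>b"
  shows "Npar T (transpose a b)"
proof (cases "a<b")
  case True then show ?thesis using Npar_transpose_lt[OF T ab(1,2)] by simp
next
  case False then have "b<a" using ab by auto
  then show ?thesis using Npar_transpose_lt[OF T ab(2,1)] by (simp add: transpose_commute)
qed

lemma Npar_cycle_of_list:
  "finite T \<Longrightarrow> distinct cs \<Longrightarrow> set cs \<subseteq> T \<Longrightarrow> Npar T (cycle_of_list cs) = odd (length cs - 1)"
proof (induction cs rule: cycle_of_list.induct)
  case (1 i j cs)
  have p1: "transpose i j permutes T" using 1 by (auto intro: permutes_swap_id)
  have p2: "cycle_of_list (j#cs) permutes T"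
    using cycle_permutes[of "j#cs"] 1 by (auto intro: permutes_subset)
  have "Npar T (cycle_of_list (i # j # cs)) = (Npar T (transpose i j) \<noteq> Npar T (cycle_of_list (j#cs)))"
    using Npar_hom[OF 1(2) p1 p2] by simp
  also have "\<dots> = (True \<noteq> odd (length cs))" using 1 Npar_transpose[of T i j] by auto
  finally show ?case by (simp del: cycle_of_list.simps)
qed (auto simp: Npar_id)

lemma orbit_eq_of_mem:
  assumes "permutation f" "x \<in> orbit f a"
  shows "orbit f x = orbit f a"
proof
  show "orbit f x \<subseteq> orbit f a" using assms by (auto intro: orbit_trans)
  have "a \<in> orbit f x" using assms by (auto intro: orbit_swap permutation_self_in_orbit)
  then show "orbit f a \<subseteq> orbit f x" by (auto intro: orbit_trans)
qed

lemma orbit_support: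
  assumes "permutation f"
  shows "set (support f a) = orbit f a"
  using support_set[OF assms] orbit_altdef_permutation[OF assms] by auto

lemma perm_restrict_permutes:
  assumes "f permutes U" "finite U" "S \<subseteq> U" "\<And>x. x\<in>S \<Longrightarrow> f x \<in> S"
  shows "perm_restrict f S permutes S"
proof (rule bij_imp_permutes)
  have inj: "inj_on f S" using assms permutes_inj by (metis inj_on_subset top_greatest)
  have "finite S" using assms finite_subset by auto
  then have "f ` S = S" using endo_inj_surj[OF _ _ inj] assms(4) by auto
  then have "bij_betw f S S" using inj by (simp add: bij_betw_def)
  then show "bij_betw (perm_restrict f S) S S"
    by (rule bij_betw_cong[THEN iffD1, rotated]) (simp add: perm_restrict_simps)
  show "x \<notin> S \<Longrightarrow> perm_restrict f S x = x" for x by (simp add: perm_restrict_simps)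
qed

lemma Npar_cong:
  assumes "\<And>x. x\<in>T \<Longrightarrow> p x = q x"
  shows "Npar T p = Npar T q"
proof -
  have "invs T p = invs T q" using assms by (auto simp: invs_def)
  then show ?thesis by (simp add: Npar_def)
qed

lemma cycles_K:
  assumes s: "\<sigma> permutes {..<n}"
  shows "finite \<C> \<Longrightarrow> \<C> \<subseteq> cycles_of n \<sigma> \<Longrightarrow> finite T \<Longrightarrow> \<Union>\<C> \<subseteq> T \<Longrightarrow>
     Npar T (perm_restrict \<sigma> (\<Union>\<C>)) = odd (\<Sum>C\<in>\<C>. card C - 1)"
proof (induction \<C> arbitrary: T rule: finite_induct)
  case empty
  have "perm_restrict \<sigma> {} = id" by (auto simp: perm_restrict_def)
  then show ?case using Npar_id by (simp add: id_def)
next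
  case (insert C \<C>)
  have perm: "permutation \<sigma>" using s permutation_permutes by blast
  obtain a where a: "a < n" "C = orbit \<sigma> a" using insert by (auto simp: cycles_of_def)
  define S where "S = \<Union>\<C>"
  have inv: "\<sigma> x \<in> orbit \<sigma> b" if "x \<in> orbit \<sigma> b" for x b
    using that by (rule orbit.step)
  have Sinv: "\<sigma> x \<in> S" if "x\<in>S" for x
  proof -
    from that obtain D where "D\<in>\<C>" "x\<in>D" by (auto simp: S_def)
    moreover then obtain b where "D = orbit \<sigma> b" using insert by (auto simp: cycles_of_def)
    ultimately show ?thesis using inv by (auto simp: S_def)
  qed
  have disj: "C \<inter> S = {}"
  proof (rule ccontr)
    assume "C \<inter> S \<noteq> {}"
    then obtain x D where "x\<in>C" "D\<in>\<C>" "x\<in>D" by (auto simp: S_def)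
    moreover then obtain b where "D = orbit \<sigma> b" using insert by (auto simp: cycles_of_def)
    ultimately have "C = D" using orbit_eq_of_mem[OF perm] a by metis
    then show False using insert \<open>D\<in>\<C>\<close> by auto
  qed
  have Csup: "set (support \<sigma> a) = C" using orbit_support[OF perm] a by simp
  have comp: "perm_restrict \<sigma> (\<Union>(insert C \<C>)) = cycle_of_list (support \<sigma> a) \<circ> perm_restrict \<sigma> S"
  proof
    fix x
    show "perm_restrict \<sigma> (\<Union>(insert C \<C>)) x = (cycle_of_list (support \<sigma> a) \<circ> perm_restrict \<sigma> S) x"
    proof (cases "x \<in> S")
      case True
      then have "\<sigma> x \<notin> set (support \<sigma> a)" using Sinv disj Csup by auto
      then show ?thesis using True by (simp add: perm_restrict_simps S_def id_outside_supp)
    next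
      case False
      note F = False
      show ?thesis
      proof (cases "x \<in> C")
        case True
        then show ?thesis using F cycle_restrict[OF perm, of x a] Csup
          by (simp add: perm_restrict_simps S_def)
      next
        case False
        then show ?thesis using F Csup by (simp add: perm_restrict_simps S_def id_outside_supp)
      qed
    qed
  qed
  have fT: "finite T" and sub: "C \<subseteq> T" "S \<subseteq> T" using insert by (auto simp: S_def)
  have pC: "cycle_of_list (support \<sigma> a) permutes T"
    using cycle_permutes[of "support \<sigma> a"] Csup sub by (auto intro: permutes_subset)
  have fU: "finite {..<n}" by simp
  have Ssub: "S \<subseteq> {..<n}"
  proof
    fix x assume "x \<in> S"
    then obtain D where "D\<in>\<C>" "x\<in>D" by (auto simp: S_def)
    moreover then obtain b where "b<n" "D = orbit \<sigma> b" using insert by (auto simp: cycles_of_def)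
    ultimately obtain k where "x = (\<sigma>^^k) b" "b<n" by (auto simp: orbit_altdef)
    then show "x \<in> {..<n}"
      using permutes_in_image[OF permutes_funpow[OF s, of k]] by auto
  qed
  have pS: "perm_restrict \<sigma> S permutes T"
    using perm_restrict_permutes[OF s fU Ssub Sinv] sub by (auto intro: permutes_subset)
  have dist: "distinct (support \<sigma> a)" using cycle_of_permutation[OF perm] .
  have cardC: "card C = length (support \<sigma> a)"
    using distinct_card[OF dist] Csup by simp
  have "Npar T (perm_restrict \<sigma> (\<Union>(insert C \<C>))) = (Npar T (cycle_of_list (support \<sigma> a)) \<noteq> Npar T (perm_restrict \<sigma> S))"
    unfolding comp by (rule Npar_hom[OF fT pC pS])
  also have "\<dots> = (odd (card C - 1) \<noteq> odd (\<Sum>C\<in>\<C>. card C - 1))"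
    using Npar_cycle_of_list[OF fT dist] Csup sub cardC insert.IH[of T] insert.prems by (simp add: S_def)
  also have "\<dots> = odd (\<Sum>C\<in>insert C \<C>. card C - 1)"
    by (simp only: sum.insert[OF insert.hyps] odd_add)
  finally show ?case .
qed


lemma cycles_L:
  assumes s: "\<sigma> permutes {..<n}" and v: "\<And>i. v i = (i<n \<and> \<mu> (orbit \<sigma> i))"
  shows "odd (card {(i,j). i<j \<and> j<n \<and> v i \<and> v j \<and> \<sigma> j < \<sigma> i})
       = odd (\<Sum>C\<in>cycles_of n \<sigma>. if \<mu> C then card C - 1 else 0)"
proof -
  have perm: "permutation \<sigma>" using s permutation_permutes by blast
  define \<C> where "\<C> = {C\<in>cycles_of n \<sigma>. \<mu> C}"
  have fin: "finite (cycles_of n \<sigma>)" by (simp add: cycles_of_def)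
  have S: "\<Union>\<C> = {i. v i}"
  proof
    show "\<Union>\<C> \<subseteq> {i. v i}"
    proof
      fix x assume "x \<in> \<Union>\<C>"
      then obtain b where b: "b<n" "x \<in> orbit \<sigma> b" "\<mu> (orbit \<sigma> b)" by (auto simp: \<C>_def cycles_of_def)
      then have "orbit \<sigma> x = orbit \<sigma> b" using orbit_eq_of_mem[OF perm] by blast
      moreover obtain k where "x = (\<sigma>^^k) b" using b by (auto simp: orbit_altdef)
      then have "x < n" using permutes_in_image[OF permutes_funpow[OF s, of k]] b by auto
      ultimately show "x \<in> {i. v i}" using b v by auto
    qed
    show "{i. v i} \<subseteq> \<Union>\<C>"
      using v permutation_self_in_orbit[OF perm] by (auto simp: \<C>_def cycles_of_def)
  qed
  define T where "T = {i. v i}"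
  have fT: "finite T" unfolding T_def using v by (auto intro: finite_subset[of _ "{..<n}"])
  have "{(i,j). i<j \<and> j<n \<and> v i \<and> v j \<and> \<sigma> j < \<sigma> i} = invs T \<sigma>"
    using v by (auto simp: invs_def T_def)
  then have "odd (card {(i,j). i<j \<and> j<n \<and> v i \<and> v j \<and> \<sigma> j < \<sigma> i}) = Npar T \<sigma>"
    by (simp add: Npar_def)
  also have "\<dots> = Npar T (perm_restrict \<sigma> (\<Union>\<C>))"
    by (rule Npar_cong) (simp add: S T_def perm_restrict_simps)
  also have "\<dots> = odd (\<Sum>C\<in>\<C>. card C - 1)"
    by (rule cycles_K[OF s]) (use fin fT S T_def in \<open>auto simp: \<C>_def\<close>)
  also have "(\<Sum>C\<in>\<C>. card C - 1) = (\<Sum>C\<in>cycles_of n \<sigma>. if \<mu> C then card C - 1 else 0)"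
    unfolding \<C>_def by (rule sum.inter_filter[OF fin])
  finally show ?thesis .
qed


definition beta :: "nat \<Rightarrow> vec \<Rightarrow> vec \<Rightarrow> bool" where
  "beta n u w = odd (card {(i,j). i<j \<and> j<n \<and> u i \<and> w j})"

lemma Hmul_beta: "Hmul n x y = (vadd (fst x) (fst y), (snd x \<noteq> snd y) \<noteq> beta n (fst x) (fst y))"
  by (simp add: Hmul_def beta_def)

lemma finA: "finite {(i,j). i<j \<and> j<(n::nat)}"
  by (rule finite_subset[of _ "{..<n}\<times>{..<n}"]) auto

lemma beta_add1: "beta n (vadd u1 u2) w = (beta n u1 w \<noteq> beta n u2 w)"
proof -
  have "{(i,j). i<j \<and> j<n \<and> vadd u1 u2 i \<and> w j} =
        {x\<in>{(i,j). i<j \<and> j<n}. (\<lambda>(i,j). u1 i \<and> w j) x \<noteq> (\<lambda>(i,j). u2 i \<and> w j) x}"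
    by (auto simp: vadd_def)
  moreover have "{(i,j). i<j \<and> j<n \<and> u1 i \<and> w j} = {x\<in>{(i,j). i<j \<and> j<n}. (\<lambda>(i,j). u1 i \<and> w j) x}"
    by auto
  moreover have "{(i,j). i<j \<and> j<n \<and> u2 i \<and> w j} = {x\<in>{(i,j). i<j \<and> j<n}. (\<lambda>(i,j). u2 i \<and> w j) x}"
    by auto
  ultimately show ?thesis unfolding beta_def using odd_card_xor[OF finA] by simp
qed

lemma beta_add2: "beta n u (vadd w1 w2) = (beta n u w1 \<noteq> beta n u w2)"
proof -
  have "{(i,j). i<j \<and> j<n \<and> u i \<and> vadd w1 w2 j} =
        {x\<in>{(i,j). i<j \<and> j<n}. (\<lambda>(i,j). u i \<and> w1 j) x \<noteq> (\<lambda>(i,j). u i \<and> w2 j) x}"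
    by (auto simp: vadd_def)
  moreover have "{(i,j). i<j \<and> j<n \<and> u i \<and> w1 j} = {x\<in>{(i,j). i<j \<and> j<n}. (\<lambda>(i,j). u i \<and> w1 j) x}"
    by auto
  moreover have "{(i,j). i<j \<and> j<n \<and> u i \<and> w2 j} = {x\<in>{(i,j). i<j \<and> j<n}. (\<lambda>(i,j). u i \<and> w2 j) x}"
    by auto
  ultimately show ?thesis unfolding beta_def using odd_card_xor[OF finA] by simp
qed

lemma beta_z1[simp]: "beta n zvec w = False" by (simp add: beta_def zvec_def)
lemma beta_z2[simp]: "beta n u zvec = False" by (simp add: beta_def zvec_def)

lemma vadd_assoc: "vadd (vadd a b) c = vadd a (vadd b c)" by (auto simp: vadd_def)
lemma vadd_z1[simp]: "vadd zvec a = a" by (auto simp: vadd_def zvec_def)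
lemma vadd_z2[simp]: "vadd a zvec = a" by (auto simp: vadd_def zvec_def)
lemma vadd_self[simp]: "vadd a a = zvec" by (auto simp: vadd_def zvec_def)

lemma Hmul_assoc: "Hmul n (Hmul n x y) z = Hmul n x (Hmul n y z)"
  by (simp add: Hmul_beta vadd_assoc beta_add1 beta_add2) blast

lemma Hmul_e1[simp]: "Hmul n (zvec, False) y = y" by (simp add: Hmul_beta)
lemma Hmul_e2[simp]: "Hmul n y (zvec, False) = y" by (simp add: Hmul_beta)

lemma foldl_Hmul: "foldl (Hmul n) acc xs = Hmul n acc (foldl (Hmul n) (zvec, False) xs)"
proof (induction xs arbitrary: acc)
  case Nil then show ?case by simp
next
  case (Cons x xs)
  have "foldl (Hmul n) acc (x#xs) = Hmul n (Hmul n acc x) (foldl (Hmul n) (zvec, False) xs)"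
    using Cons[of "Hmul n acc x"] by simp
  also have "\<dots> = Hmul n acc (Hmul n x (foldl (Hmul n) (zvec, False) xs))" by (simp add: Hmul_assoc)
  also have "\<dots> = Hmul n acc (foldl (Hmul n) (zvec, False) (x#xs))"
    using Cons[of x] by simp
  finally show ?case .
qed

lemma Hact_prod:
  assumes p: "p permutes {..<n}" and m: "m \<le> n"
  shows "foldl (Hmul n) (zvec, False) (map (\<lambda>i. xgen (p i)) (rev (filter a [0..<m])))
       = (\<lambda>k. \<exists>i<m. a i \<and> p i = k, odd (card {(i,j). i<j \<and> j<m \<and> a i \<and> a j \<and> p j < p i}))"
  using m
proof (induction m)
  case 0 then show ?case by (simp add: zvec_def)
next
  case (Suc m)
  have IH: "foldl (Hmul n) (zvec, False) (map (\<lambda>i. xgen (p i)) (rev (filter a [0..<m])))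
       = (\<lambda>k. \<exists>i<m. a i \<and> p i = k, odd (card {(i,j). i<j \<and> j<m \<and> a i \<and> a j \<and> p j < p i}))"
    using Suc by simp
  have mn: "m < n" using Suc by simp
  have pinj: "inj p" using p permutes_inj by blast
  have plt: "p i < n" if "i < n" for i using permutes_in_image[OF p, of i] that by simp
  show ?case
  proof (cases "a m")
    case False
    have "{(i,j). i<j \<and> j<Suc m \<and> a i \<and> a j \<and> p j < p i} = {(i,j). i<j \<and> j<m \<and> a i \<and> a j \<and> p j < p i}"
      using False by (auto simp: less_Suc_eq)
    moreover have "(\<lambda>k. \<exists>i<Suc m. a i \<and> p i = k) = (\<lambda>k. \<exists>i<m. a i \<and> p i = k)"
      using False by (auto simp: less_Suc_eq)
    ultimately show ?thesis using IH False by simp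
  next
    case True
    define V where "V = (\<lambda>k. \<exists>i<m. a i \<and> p i = k)"
    define Inv where "Inv = {(i,j). i<j \<and> j<m \<and> a i \<and> a j \<and> p j < p i}"
    define W where "W = {i. i<m \<and> a i \<and> p m < p i}"
    have fW: "finite W" by (auto simp: W_def)
    have lhs: "foldl (Hmul n) (zvec, False) (map (\<lambda>i. xgen (p i)) (rev (filter a [0..<Suc m])))
        = Hmul n (unitv (p m), False) (V, odd (card Inv))"
      using True IH foldl_Hmul[of n "Hmul n (zvec, False) (xgen (p m))"]
      by (simp add: xgen_def V_def Inv_def)
    have vec: "vadd (unitv (p m)) V = (\<lambda>k. \<exists>i<Suc m. a i \<and> p i = k)"
    proof
      fix k
      have "\<not> (k = p m \<and> V k)" using pinj by (auto simp: V_def dest: injD)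
      then show "vadd (unitv (p m)) V k = (\<exists>i<Suc m. a i \<and> p i = k)"
        using True by (auto simp: vadd_def unitv_def V_def less_Suc_eq)
    qed
    have b1: "{(i,j). i<j \<and> j<n \<and> unitv (p m) i \<and> V j} = (\<lambda>i. (p m, p i)) ` W"
    proof
      show "{(i,j). i<j \<and> j<n \<and> unitv (p m) i \<and> V j} \<subseteq> (\<lambda>i. (p m, p i)) ` W"
        by (auto simp: unitv_def V_def W_def)
      show "(\<lambda>i. (p m, p i)) ` W \<subseteq> {(i,j). i<j \<and> j<n \<and> unitv (p m) i \<and> V j}"
        using mn by (auto simp: unitv_def V_def W_def intro: plt)
    qed
    have cb: "card {(i,j). i<j \<and> j<n \<and> unitv (p m) i \<and> V j} = card W"
      unfolding b1 by (rule card_image) (use pinj in \<open>auto simp: inj_on_def dest: injD\<close>)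
    have i1: "{(i,j). i<j \<and> j<Suc m \<and> a i \<and> a j \<and> p j < p i} = Inv \<union> (\<lambda>i. (i, m)) ` W"
      using True by (auto simp: Inv_def W_def less_Suc_eq)
    have fI: "finite Inv" by (rule finite_subset[of _ "{..<m}\<times>{..<m}"]) (auto simp: Inv_def)
    have ci: "card (Inv \<union> (\<lambda>i. (i, m)) ` W) = card Inv + card W"
      by (subst card_Un_disjoint) (use fI fW in \<open>auto simp: Inv_def W_def card_image inj_on_def\<close>)
    have "Hmul n (unitv (p m), False) (V, odd (card Inv)) =
      (vadd (unitv (p m)) V, odd (card Inv) \<noteq> odd (card W))"
      using cb by (simp add: Hmul_beta beta_def)
    also have "\<dots> = (\<lambda>k. \<exists>i<Suc m. a i \<and> p i = k, odd (card {(i,j). i<j \<and> j<Suc m \<and> a i \<and> a j \<and> p j < p i}))"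
      unfolding vec i1 ci by simp
    finally show ?thesis using lhs by simp
  qed
qed

lemma Hact_closed:
  assumes p: "p permutes {..<n}" and a: "\<And>i. n \<le> i \<Longrightarrow> \<not> a i"
  shows "Hact n p (a, b) = (pact p a, b \<noteq> odd (card {(i,j). i<j \<and> j<n \<and> a i \<and> a j \<and> p j < p i}))"
proof -
  have "Hact n p (a,b) = Hmul n (zvec, b) (\<lambda>k. \<exists>i<n. a i \<and> p i = k, odd (card {(i,j). i<j \<and> j<n \<and> a i \<and> a j \<and> p j < p i}))"
    unfolding Hact_def using foldl_Hmul[of n "(zvec,b)"] Hact_prod[OF p order_refl, of a] by simp
  moreover have "(\<lambda>k. \<exists>i<n. a i \<and> p i = k) = pact p a"
  proof
    fix k
    show "(\<exists>i<n. a i \<and> p i = k) = pact p a k"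
    proof (cases "k < n")
      case True
      then show ?thesis using p unfolding pact_def
        by (metis lessThan_iff permutes_in_image permutes_inverses(1) permutes_inverses(2) permutes_inv)
    next
      case False
      then have "inv p k = k" using p permutes_inv permutes_not_in by fastforce
      moreover have "\<not> (\<exists>i<n. a i \<and> p i = k)" using permutes_in_image[OF p] False by auto
      ultimately show ?thesis using a False by (simp add: pact_def)
    qed
  qed
  ultimately show ?thesis by (simp add: Hmul_beta)
qed


lemma Hact_zero:
  assumes p: "p permutes {..<n}"
  shows "Hact n p (zvec, False) = (zvec, False)"
proof -
  have "Hact n p (zvec, False) = (pact p zvec, odd (card {(i,j). i<j \<and> j<n \<and> zvec i \<and> zvec j \<and> p j < p i}))"
    using Hact_closed[OF p, of zvec False] by (simp add: zvec_def)
  then show ?thesis by (simp add: zvec_def pact_def)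
qed

lemma Hact_inv_cancel:
  assumes p: "p permutes {..<n}" and v: "\<And>i. n \<le> i \<Longrightarrow> \<not> v i"
  shows "Hact n p (Hact n (inv p) (v, b)) = (v, b)"
proof -
  have ip: "inv p permutes {..<n}" using p by (rule permutes_inv)
  define J1 where "J1 = {(i,j). i<j \<and> j<n \<and> v i \<and> v j \<and> inv p j < inv p i}"
  have h1: "Hact n (inv p) (v, b) = (pact (inv p) v, b \<noteq> odd (card J1))"
    using Hact_closed[OF ip v] by (simp add: J1_def)
  have pv: "pact (inv p) v = (\<lambda>k. v (p k))"
    using p by (simp add: pact_def inv_inv_eq permutes_bij)
  have v': "\<And>i. n \<le> i \<Longrightarrow> \<not> pact (inv p) v i"
    unfolding pv using p v permutes_not_in by fastforce
  define J2 where "J2 = {(i,j). i<j \<and> j<n \<and> v (p i) \<and> v (p j) \<and> p j < p i}"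
  have h2: "Hact n p (pact (inv p) v, c) = (pact p (pact (inv p) v), c \<noteq> odd (card J2))" for c
    using Hact_closed[OF p v'] by (simp add: J2_def pv)
  have pp: "pact p (pact (inv p) v) = v"
    using p by (simp add: pact_def inv_inv_eq permutes_bij permutes_inverses)
  have J: "J2 = (\<lambda>(i,j). (inv p j, inv p i)) ` J1"
  proof
    show "J2 \<subseteq> (\<lambda>(i,j). (inv p j, inv p i)) ` J1"
    proof
      fix z assume "z \<in> J2"
      then obtain i j where z: "z = (i,j)" "i<j" "j<n" "v (p i)" "v (p j)" "p j < p i" by (auto simp: J2_def)
      have "i < n" using z by auto
      then have "p i < n" "p j < n" using z permutes_in_image[OF p] by auto
      then have "(p j, p i) \<in> J1" using z p by (auto simp: J1_def permutes_inverses)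
      moreover have "z = (\<lambda>(i,j). (inv p j, inv p i)) (p j, p i)" using z p by (simp add: permutes_inverses)
      ultimately show "z \<in> (\<lambda>(i,j). (inv p j, inv p i)) ` J1" by blast
    qed
    show "(\<lambda>(i,j). (inv p j, inv p i)) ` J1 \<subseteq> J2"
    proof
      fix z assume "z \<in> (\<lambda>(i,j). (inv p j, inv p i)) ` J1"
      then obtain i j where z: "z = (inv p j, inv p i)" "i<j" "j<n" "v i" "v j" "inv p j < inv p i"
        by (auto simp: J1_def)
      have "i < n" using z by auto
      then have "inv p i < n" using permutes_in_image[OF ip] by auto
      then show "z \<in> J2" using z p by (auto simp: J2_def permutes_inverses)
    qed
  qed
  have "inj_on (\<lambda>(i,j). (inv p j, inv p i)) J1"
    using permutes_inj[OF ip] by (auto simp: inj_on_def dest: injD)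
  then have "card J2 = card J1" unfolding J by (rule card_image)
  then show ?thesis unfolding h1 h2 pp by auto
qed

lemma phi_formula:
  assumes s: "\<sigma> permutes {..<n}" and p: "p permutes {..<n}" and v: "\<And>i. n \<le> i \<Longrightarrow> \<not> v i"
    and comm: "\<sigma> \<circ> p = p \<circ> \<sigma>" and vinv: "pact \<sigma> v = v"
  shows "phi n (Bperm \<sigma>) (v, p) = ((zvec, odd (card {(i,j). i<j \<and> j<n \<and> v i \<and> v j \<and> \<sigma> j < \<sigma> i})), id)"
proof -
  define I where "I = odd (card {(i,j). i<j \<and> j<n \<and> v i \<and> v j \<and> \<sigma> j < \<sigma> i})"
  have isg: "inv \<sigma> permutes {..<n}" using s by (rule permutes_inv)
  have sp: "\<sigma> \<circ> p permutes {..<n}" using s p by (rule permutes_compose[rotated])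
  have h1: "Hact n \<sigma> (v, False) = (v, I)" using Hact_closed[OF s v] vinv by (simp add: I_def)
  have hinv0: "Hinv n (zvec, False) = (zvec, False)" by (simp add: Hinv_def zvec_def)
  have hinvv: "Hinv n (v, False) = (v, beta n v v)" by (simp add: Hinv_def beta_def)
  have c1: "\<sigma> \<circ> p \<circ> inv \<sigma> = p"
    using comm s by (simp add: o_assoc[symmetric] permutes_inv_o)
  have c2: "p \<circ> inv p = id" using p by (simp add: permutes_inv_o)
  have "phi n (Bperm \<sigma>) (v, p) =
    Gmul n (Gmul n (Gmul n ((zvec, False), \<sigma>) ((v, False), p)) ((Hact n (inv \<sigma>) (Hinv n (zvec, False))), inv \<sigma>))
       ((Hact n (inv p) (Hinv n (v, False))), inv p)"
    by (simp add: phi_def lift_def Bperm_def Ginv_def)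
  also have "\<dots> = ((Hmul n (v, I) (v, beta n v v)), id)"
    unfolding hinv0 hinvv Hact_zero[OF isg] Gmul_def fst_conv snd_conv Hmul_e1 h1 Hact_zero[OF sp] Hmul_e2 c1
 c2 by (simp add: Hact_inv_cancel[OF p v])
  also have "\<dots> = ((zvec, I), id)" by (simp add: Hmul_beta) blast
  finally show ?thesis by (simp add: I_def)
qed


lemma funpow_comm: "q \<circ> \<sigma> = \<sigma> \<circ> q \<Longrightarrow> q ((\<sigma>^^m) x) = (\<sigma>^^m) (q x)"
  by (induction m) (auto simp: fun_eq_iff)

lemma orbit_image:
  assumes "permutation \<sigma>" "q \<circ> \<sigma> = \<sigma> \<circ> q"
  shows "q ` orbit \<sigma> x = orbit \<sigma> (q x)"
proof -
  have c: "q ((\<sigma>^^m) x) = (\<sigma>^^m) (q x)" for m using funpow_comm[OF assms(2)] .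
  show ?thesis unfolding orbit_altdef_permutation[OF assms(1)]
  proof (intro set_eqI iffI)
    fix y assume "y \<in> {(\<sigma> ^^ n) (q x) |n. True}"
    then obtain m where "y = (\<sigma> ^^ m) (q x)" by auto
    then have "y = q ((\<sigma>^^m) x)" using c by simp
    then show "y \<in> q ` {(\<sigma> ^^ n) x |n. True}" by blast
  qed (auto simp: c)
qed

lemma inv_comm:
  assumes p: "p permutes S" and c: "p \<circ> \<sigma> = \<sigma> \<circ> p"
  shows "inv p \<circ> \<sigma> = \<sigma> \<circ> inv p"
proof -
  have "inv p \<circ> \<sigma> = inv p \<circ> \<sigma> \<circ> (p \<circ> inv p)" using p by (simp add: permutes_inv_o)
  also have "\<dots> = inv p \<circ> (p \<circ> \<sigma>) \<circ> inv p" using c by (simp add: o_assoc)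
  also have "\<dots> = \<sigma> \<circ> inv p" using p by (simp add: o_assoc permutes_inv_o)
  finally show ?thesis .
qed

theorem corollary2p4:
  fixes n :: nat and \<sigma> :: perm and \<tau> :: "vec \<times> perm"
  assumes "n \<ge> 1"
    and "\<sigma> permutes {..<n}"
    and "\<tau> \<in> Bcarrier n"
    and "Bmul (Bperm \<sigma>) \<tau> = Bmul \<tau> (Bperm \<sigma>)"
  shows "(\<exists>!(\<tau>', lam). \<tau>' permutes {..<n} \<and> \<tau>' \<circ> \<sigma> = \<sigma> \<circ> \<tau>'
            \<and> (\<forall>C. C \<notin> cycles_of n \<sigma> \<longrightarrow> \<not> lam C)
            \<and> \<tau> = Bmul (Bperm \<tau>') (Bvec (cycvec n \<sigma> lam)))
       \<and> (\<forall>\<tau>' lam. \<tau>' permutes {..<n} \<and> \<tau>' \<circ> \<sigma> = \<sigma> \<circ> \<tau>'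
            \<and> (\<forall>C. C \<notin> cycles_of n \<sigma> \<longrightarrow> \<not> lam C)
            \<and> \<tau> = Bmul (Bperm \<tau>') (Bvec (cycvec n \<sigma> lam))
            \<longrightarrow> phi n (Bperm \<sigma>) \<tau> = Geps (\<Sum>C\<in>cycles_of n \<sigma>. if lam C then card C - 1 else 0))"
proof -
  obtain v p where \<tau>: "\<tau> = (v, p)" by (cases \<tau>)
  have s: "\<sigma> permutes {..<n}" by fact
  have perm: "permutation \<sigma>" using s permutation_permutes by blast
  have p: "p permutes {..<n}" and v0: "\<And>i. n \<le> i \<Longrightarrow> \<not> v i"
    using assms(3) by (auto simp: \<tau> Bcarrier_def)
  have vinv: "pact \<sigma> v = v" and comm: "\<sigma> \<circ> p = p \<circ> \<sigma>"
    using assms(4) by (auto simp: \<tau> Bmul_def Bperm_def pact_def zvec_def vadd_def fun_eq_iff)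
  have vs: "v (\<sigma> k) = v k" for k
  proof -
    have "v (inv \<sigma> (\<sigma> k)) = v (\<sigma> k)" using vinv unfolding pact_def by metis
    then show ?thesis using s by (simp add: permutes_inverses)
  qed
  have vsm: "v ((\<sigma>^^m) k) = v k" for m k by (induction m) (auto simp: vs)
  have Bm: "Bmul (Bperm q) (Bvec w) = (pact q w, q)" for q w
    by (simp add: Bmul_def Bperm_def Bvec_def)
  have pn: "p i < n \<longleftrightarrow> i < n" for i using permutes_in_image[OF p, of i] by simp
  have ipn: "inv p i < n \<longleftrightarrow> i < n" for i using permutes_in_image[OF permutes_inv[OF p], of i] by simp
  define lam0 where "lam0 C = (\<exists>i<n. C = orbit \<sigma> i \<and> v (p i))" for C
  have lam0_orb: "lam0 (orbit \<sigma> i) = v (p i)" if "i < n" for i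
  proof
    assume "lam0 (orbit \<sigma> i)"
    then obtain i' where "i'<n" "orbit \<sigma> i = orbit \<sigma> i'" "v (p i')" by (auto simp: lam0_def)
    then have "i \<in> orbit \<sigma> i'" using permutation_self_in_orbit[OF perm, of i] by simp
    then obtain m where "i = (\<sigma>^^m) i'" using orbit_altdef_permutation[OF perm] by auto
    then have "p i = (\<sigma>^^m) (p i')" using funpow_comm[of p \<sigma>] comm by simp
    then show "v (p i)" using vsm \<open>v (p i')\<close> by simp
  next
    assume "v (p i)" then show "lam0 (orbit \<sigma> i)" using that by (auto simp: lam0_def)
  qed
  have lam0_out: "\<not> lam0 C" if "C \<notin> cycles_of n \<sigma>" for C
    using that by (auto simp: lam0_def cycles_of_def)
  have w0: "pact p (cycvec n \<sigma> lam0) = v"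
  proof
    fix k
    show "pact p (cycvec n \<sigma> lam0) k = v k"
    proof (cases "k < n")
      case True
      then have "inv p k < n" using ipn by simp
      then show ?thesis using True lam0_orb[of "inv p k"] p
        by (simp add: pact_def cycvec_def permutes_inverses)
    next
      case False
      then have "inv p k = k" using permutes_inv[OF p] permutes_not_in by fastforce
      then show ?thesis using False v0 by (simp add: pact_def cycvec_def)
    qed
  qed
  let ?P = "\<lambda>(\<tau>', lam). \<tau>' permutes {..<n} \<and> \<tau>' \<circ> \<sigma> = \<sigma> \<circ> \<tau>'
            \<and> (\<forall>C. C \<notin> cycles_of n \<sigma> \<longrightarrow> \<not> lam C)
            \<and> \<tau> = Bmul (Bperm \<tau>') (Bvec (cycvec n \<sigma> lam))"
  have part1: "\<exists>!x. ?P x"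
  proof (rule ex1I[of _ "(p, lam0)"])
    show "?P (p, lam0)" using p comm lam0_out w0 by (simp add: \<tau> Bm)
  next
    fix x assume Px: "?P x"
    obtain t lam where x: "x = (t, lam)" by (cases x)
    have t: "t = p" and w: "pact p (cycvec n \<sigma> lam) = v"
      using Px by (auto simp: x \<tau> Bm)
    have "lam = lam0"
    proof
      fix C
      show "lam C = lam0 C"
      proof (cases "C \<in> cycles_of n \<sigma>")
        case False then show ?thesis using Px lam0_out by (simp add: x)
      next
        case True
        then obtain i where i: "i<n" "C = orbit \<sigma> i" by (auto simp: cycles_of_def)
        have "v (p i) = cycvec n \<sigma> lam i"
          using w[symmetric] p by (simp add: pact_def permutes_inverses)
        then show ?thesis using i lam0_orb[OF i(1)] by (simp add: cycvec_def)
      qed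
    qed
    then show "x = (p, lam0)" using x t by simp
  qed
  have part2: "phi n (Bperm \<sigma>) \<tau> = Geps (\<Sum>C\<in>cycles_of n \<sigma>. if lam C then card C - 1 else 0)"
    if H: "t permutes {..<n}" "t \<circ> \<sigma> = \<sigma> \<circ> t" "\<forall>C. C \<notin> cycles_of n \<sigma> \<longrightarrow> \<not> lam C"
      "\<tau> = Bmul (Bperm t) (Bvec (cycvec n \<sigma> lam))" for t lam
  proof -
    have t: "t = p" and w: "v = pact p (cycvec n \<sigma> lam)" using H(4) by (auto simp: \<tau> Bm)
    have ic: "inv p \<circ> \<sigma> = \<sigma> \<circ> inv p" using inv_comm[OF p] comm by simp
    have vform: "v i = (i < n \<and> lam (inv p ` orbit \<sigma> i))" for i
      using w ipn orbit_image[OF perm ic, of i] by (simp add: pact_def cycvec_def)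
    have ph: "phi n (Bperm \<sigma>) \<tau> = ((zvec, odd (card {(i,j). i<j \<and> j<n \<and> v i \<and> v j \<and> \<sigma> j < \<sigma> i})), id)"
      unfolding \<tau> by (rule phi_formula[OF s p v0 comm vinv])
    have L: "odd (card {(i,j). i<j \<and> j<n \<and> v i \<and> v j \<and> \<sigma> j < \<sigma> i})
       = odd (\<Sum>C\<in>cycles_of n \<sigma>. if lam (inv p ` C) then card C - 1 else 0)"
      by (rule cycles_L[OF s vform])
    define g where "g C = (if lam C then card C - 1 else 0)" for C
    have injp: "inj (inv p)" using permutes_inj[OF permutes_inv[OF p]] .
    have bij: "bij_betw (image (inv p)) (cycles_of n \<sigma>) (cycles_of n \<sigma>)"
    proof (rule bij_betw_imageI)
      show "inj_on (image (inv p)) (cycles_of n \<sigma>)"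
        using injp by (auto simp: inj_on_def inj_image_eq_iff)
      show "image (inv p) ` cycles_of n \<sigma> = cycles_of n \<sigma>"
      proof
        show "image (inv p) ` cycles_of n \<sigma> \<subseteq> cycles_of n \<sigma>"
          using orbit_image[OF perm ic] ipn by (auto simp: cycles_of_def)
        show "cycles_of n \<sigma> \<subseteq> image (inv p) ` cycles_of n \<sigma>"
        proof
          fix C assume "C \<in> cycles_of n \<sigma>"
          then obtain k where k: "k<n" "C = orbit \<sigma> k" by (auto simp: cycles_of_def)
          have "C = inv p ` orbit \<sigma> (p k)"
            using orbit_image[OF perm ic, of "p k"] k p by (simp add: permutes_inverses)
          moreover have "orbit \<sigma> (p k) \<in> cycles_of n \<sigma>" using k pn by (auto simp: cycles_of_def)
          ultimately show "C \<in> image (inv p) ` cycles_of n \<sigma>" by blast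
        qed
      qed
    qed
    have "(\<Sum>C\<in>cycles_of n \<sigma>. if lam (inv p ` C) then card C - 1 else 0) = (\<Sum>C\<in>cycles_of n \<sigma>. g (inv p ` C))"
      by (rule sum.cong) (auto simp: g_def card_image[OF inj_on_subset[OF injp]])
    also have "\<dots> = (\<Sum>C\<in>cycles_of n \<sigma>. g C)" by (rule sum.reindex_bij_betw[OF bij])
    finally show ?thesis unfolding ph L by (simp add: Geps_def g_def)
  qed
  show ?thesis using part1 part2 by blast
qed

end
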